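(* Let $\mathcal U=(V,\tilde V,W,\tilde W,R)$ be an ordered gradient space. The following are equivalent: (a) every pair $u_1,u_2\in V_+$ has a $V_+$-least upper bound; (b) for all $u_1,u_2\in V_+$, $\max(u_1,u_2)$ is the $V_+$-least upper bound of $u_1,u_2$; (c) $V_+$ (with the order $\le$) is a lattice; (d) every pair $u_1,u_2\in V_+$ has a $V_+$-greatest lower bound; (e) for all $u_1,u_2\in V_+$, $\min(u_1,u_2)$ is the $V_+$-greatest lower bound of $u_1,u_2$.
   Context: A gradient space $\mathcal U=(V,\tilde V,W,\tilde W,R)$ consists of vector spaces $\tilde V,\tilde W$ over $\mathbf R$ or $\mathbf C$, a relation $R\subseteq\tilde V\times\tilde W$ closed under addition and under multiplication by positive scalars, and linear subspaces $V\subseteq\tilde V$, $W\subseteq\tilde W$ such that $V$ is a reflexive Banach space (norm $\|\cdot\|_V$), $W$ is a reflexive strictly convex Banach space, for every $(u,g)\in R\cap(V\times W)$ there is $g'\in W$ with $(-u,g')\in R$, and $R\cap(V\times W)$ is closed in $V\times W$. A linear preorder on $\tilde V$ is a relation $\le$ with: $a\le a$; $a\le b,\ b\le c\Rightarrow a\le c$; $b\le c\Rightarrow a+b\le a+c$; $a\le b,\ \alpha\in[0,\infty)\Rightarrow\alpha a\le\alpha b$. A preordered gradient space is a gradient space with a linear preorder $\le$ on $\tilde V$ such that if $u_i\in V$, $\psi\in\tilde V$, $u_i\le\psi$ for all $i$ and $u_i\to u$ in $V$, then $u\le\psi$. An ordered gradient space is a preordered gradient space such that $V$ is strictly convex and,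 for $u,v\in V$, $0\le u\le v$ implies $\|u\|_V\le\|v\|_V$ (then $\le$ is a partial order on $V$). Let $V_+=\{v\in V:v\ge0\}$ and $B_+=\{\psi\in\tilde V:0\le\psi\le u\text{ for some }u\in V\}$. For $\psi_1,\psi_2\in B_+$: $\max(\psi_1,\psi_2)$ is the unique element $u$ of $\Omega(\psi_1,\psi_2)=\{u\in V:u\ge\psi_1,\ u\ge\psi_2\}$ minimizing $\|u\|_V$ over $\Omega(\psi_1,\psi_2)$; $\min(\psi_1,\psi_2)$ is the unique element $u$ of $\Omega'(\psi_1,\psi_2)=\{v\in V:0\le v\le\psi_1,\ v\le\psi_2\}$ minimizing $\|\max(\psi_1,\psi_2)-v\|_V$ over $\Omega'(\psi_1,\psi_2)$ (both exist and are unique). An upper bound $v\in V_+$ of $\psi_1,\psi_2$ is a $V_+$-least upper bound if $v\le u$ for every upper bound $u\in V_+$ of $\psi_1,\psi_2$; $V_+$-greatest lower bounds (lower bounds in $V_+$ that dominate every lower bound in $V_+$) are defined analogously. $V_+$ is a lattice if every pair of elements of $V_+$ has a least upper bound and a greatest lower bound in $V_+$. *)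

theory Defs
  imports "HOL-Analysis.Analysis"
begin

definition reflexive_space :: "'a::banach itself \<Rightarrow> bool" where
  "reflexive_space _ \<longleftrightarrow>
     surj (\<lambda>x::'a. Blinfun (\<lambda>f::'a \<Rightarrow>\<^sub>L real. blinfun_apply f x))"

definition strictly_convex_space :: "'a::real_normed_vector itself \<Rightarrow> bool" where
  "strictly_convex_space _ \<longleftrightarrow>
     (\<forall>x y::'a. norm x = 1 \<and> norm y = 1 \<and> x \<noteq> y \<longrightarrow> norm ((1/2) *\<^sub>R (x + y)) < 1)"

text \<open>The subspaces V, W of the ambient spaces are modelled as Banach spaces (types 'a, 'b)
  together with injective linear embeddings iV, iW into the ambient vector spaces 'v, 'w.\<close>
definition gradient_space ::
  "('a::banach \<Rightarrow> 'v::real_vector) \<Rightarrow> ('b::banach \<Rightarrow> 'w::real_vector) \<Rightarrow> ('v \<times> 'w) set \<Rightarrow> bool" where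
  "gradient_space iV iW R \<longleftrightarrow>
     linear iV \<and> inj iV \<and> linear iW \<and> inj iW \<and>
     (\<forall>u g u' g'. (u, g) \<in> R \<longrightarrow> (u', g') \<in> R \<longrightarrow> (u + u', g + g') \<in> R) \<and>
     (\<forall>u g (c::real). (u, g) \<in> R \<longrightarrow> c > 0 \<longrightarrow> (c *\<^sub>R u, c *\<^sub>R g) \<in> R) \<and>
     reflexive_space TYPE('a) \<and>
     reflexive_space TYPE('b) \<and> strictly_convex_space TYPE('b) \<and>
     (\<forall>u g. (iV u, iW g) \<in> R \<longrightarrow> (\<exists>g'. (iV (- u), iW g') \<in> R)) \<and>
     closed {(u, g). (iV u, iW g) \<in> R}"

definition linear_preorder :: "('v::real_vector \<Rightarrow> 'v \<Rightarrow> bool) \<Rightarrow> bool" where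
  "linear_preorder le \<longleftrightarrow>
     (\<forall>a. le a a) \<and>
     (\<forall>a b c. le a b \<longrightarrow> le b c \<longrightarrow> le a c) \<and>
     (\<forall>a b c. le b c \<longrightarrow> le (a + b) (a + c)) \<and>
     (\<forall>a b (\<alpha>::real). le a b \<longrightarrow> \<alpha> \<ge> 0 \<longrightarrow> le (\<alpha> *\<^sub>R a) (\<alpha> *\<^sub>R b))"

definition preordered_gradient_space ::
  "('a::banach \<Rightarrow> 'v::real_vector) \<Rightarrow> ('b::banach \<Rightarrow> 'w::real_vector) \<Rightarrow> ('v \<times> 'w) set
    \<Rightarrow> ('v \<Rightarrow> 'v \<Rightarrow> bool) \<Rightarrow> bool" where
  "preordered_gradient_space iV iW R le \<longleftrightarrow>
     gradient_space iV iW R \<and> linear_preorder le \<and>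
     (\<forall>(u::nat \<Rightarrow> 'a) x \<psi>. (\<forall>i. le (iV (u i)) \<psi>) \<longrightarrow> u \<longlonglongrightarrow> x \<longrightarrow> le (iV x) \<psi>)"

definition ordered_gradient_space ::
  "('a::banach \<Rightarrow> 'v::real_vector) \<Rightarrow> ('b::banach \<Rightarrow> 'w::real_vector) \<Rightarrow> ('v \<times> 'w) set
    \<Rightarrow> ('v \<Rightarrow> 'v \<Rightarrow> bool) \<Rightarrow> bool" where
  "ordered_gradient_space iV iW R le \<longleftrightarrow>
     preordered_gradient_space iV iW R le \<and> strictly_convex_space TYPE('a) \<and>
     (\<forall>u v. le 0 (iV u) \<longrightarrow> le (iV u) (iV v) \<longrightarrow> norm u \<le> norm v)"

definition Vplus :: "('a \<Rightarrow> 'v::real_vector) \<Rightarrow> ('v \<Rightarrow> 'v \<Rightarrow> bool) \<Rightarrow> 'a set" where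
  "Vplus iV le = {v. le 0 (iV v)}"

definition Omega_max :: "('a \<Rightarrow> 'v) \<Rightarrow> ('v \<Rightarrow> 'v \<Rightarrow> bool) \<Rightarrow> 'v \<Rightarrow> 'v \<Rightarrow> 'a set" where
  "Omega_max iV le \<psi>1 \<psi>2 = {u. le \<psi>1 (iV u) \<and> le \<psi>2 (iV u)}"

definition gmax :: "('a::real_normed_vector \<Rightarrow> 'v) \<Rightarrow> ('v \<Rightarrow> 'v \<Rightarrow> bool) \<Rightarrow> 'v \<Rightarrow> 'v \<Rightarrow> 'a" where
  "gmax iV le \<psi>1 \<psi>2 =
     (THE u. u \<in> Omega_max iV le \<psi>1 \<psi>2 \<and> (\<forall>v\<in>Omega_max iV le \<psi>1 \<psi>2. norm u \<le> norm v))"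

definition Omega_min :: "('a \<Rightarrow> 'v::real_vector) \<Rightarrow> ('v \<Rightarrow> 'v \<Rightarrow> bool) \<Rightarrow> 'v \<Rightarrow> 'v \<Rightarrow> 'a set" where
  "Omega_min iV le \<psi>1 \<psi>2 = {v. le 0 (iV v) \<and> le (iV v) \<psi>1 \<and> le (iV v) \<psi>2}"

definition gmin :: "('a::real_normed_vector \<Rightarrow> 'v::real_vector) \<Rightarrow> ('v \<Rightarrow> 'v \<Rightarrow> bool) \<Rightarrow> 'v \<Rightarrow> 'v \<Rightarrow> 'a" where
  "gmin iV le \<psi>1 \<psi>2 =
     (THE v. v \<in> Omega_min iV le \<psi>1 \<psi>2 \<and>
        (\<forall>w\<in>Omega_min iV le \<psi>1 \<psi>2.
           norm (gmax iV le \<psi>1 \<psi>2 - v) \<le> norm (gmax iV le \<psi>1 \<psi>2 - w)))"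

definition is_Vplus_lub :: "('a \<Rightarrow> 'v::real_vector) \<Rightarrow> ('v \<Rightarrow> 'v \<Rightarrow> bool) \<Rightarrow> 'v \<Rightarrow> 'v \<Rightarrow> 'a \<Rightarrow> bool" where
  "is_Vplus_lub iV le \<psi>1 \<psi>2 v \<longleftrightarrow>
     v \<in> Vplus iV le \<and> le \<psi>1 (iV v) \<and> le \<psi>2 (iV v) \<and>
     (\<forall>u\<in>Vplus iV le. le \<psi>1 (iV u) \<longrightarrow> le \<psi>2 (iV u) \<longrightarrow> le (iV v) (iV u))"

definition is_Vplus_glb :: "('a \<Rightarrow> 'v::real_vector) \<Rightarrow> ('v \<Rightarrow> 'v \<Rightarrow> bool) \<Rightarrow> 'v \<Rightarrow> 'v \<Rightarrow> 'a \<Rightarrow> bool" where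
  "is_Vplus_glb iV le \<psi>1 \<psi>2 v \<longleftrightarrow>
     v \<in> Vplus iV le \<and> le (iV v) \<psi>1 \<and> le (iV v) \<psi>2 \<and>
     (\<forall>u\<in>Vplus iV le. le (iV u) \<psi>1 \<longrightarrow> le (iV u) \<psi>2 \<longrightarrow> le (iV u) (iV v))"

definition Vplus_lattice :: "('a \<Rightarrow> 'v::real_vector) \<Rightarrow> ('v \<Rightarrow> 'v \<Rightarrow> bool) \<Rightarrow> bool" where
  "Vplus_lattice iV le \<longleftrightarrow>
     (\<forall>u1\<in>Vplus iV le. \<forall>u2\<in>Vplus iV le.
        (\<exists>v. is_Vplus_lub iV le (iV u1) (iV u2) v) \<and> (\<exists>v. is_Vplus_glb iV le (iV u1) (iV u2) v))"

end

theory Submission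
  imports Defs
begin

lemma sc_unique:
  assumes sc: "strictly_convex_space TYPE('a::real_normed_vector)"
    and eq: "norm (x::'a) = norm y" and le: "norm y \<le> norm ((1/2) *\<^sub>R (x + y))"
  shows "x = y"
proof (rule ccontr)
  assume ne: "x \<noteq> y"
  define r where "r = norm x"
  have rpos: "r > 0" using ne eq unfolding r_def by (metis norm_eq_zero norm_ge_zero order_less_le)
  have n1: "norm ((1/r) *\<^sub>R x) = 1" "norm ((1/r) *\<^sub>R y) = 1"
    using rpos eq unfolding r_def by auto
  have ne': "(1/r) *\<^sub>R x \<noteq> (1/r) *\<^sub>R y" using ne rpos by auto
  have "norm ((1/2) *\<^sub>R ((1/r) *\<^sub>R x + (1/r) *\<^sub>R y)) < 1"
    using sc n1 ne' unfolding strictly_convex_space_def by blast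
  also have "(1/2) *\<^sub>R ((1/r) *\<^sub>R x + (1/r) *\<^sub>R y) = (1/r) *\<^sub>R ((1/2) *\<^sub>R (x + y))"
    by (simp add: algebra_simps)
  finally have "norm ((1/2) *\<^sub>R (x + y)) / r < 1" using rpos by simp
  hence "norm ((1/2) *\<^sub>R (x + y)) < r" using rpos by (simp add: divide_less_eq)
  with le eq show False unfolding r_def by simp
qed

locale ogs =
  fixes iV :: "'a::real_normed_vector \<Rightarrow> 'v::real_vector" and le :: "'v \<Rightarrow> 'v \<Rightarrow> bool"
  assumes lp: "linear_preorder le" and lin: "linear iV"
    and sc: "strictly_convex_space TYPE('a)"
    and mono: "\<forall>u v. le 0 (iV u) \<longrightarrow> le (iV u) (iV v) \<longrightarrow> norm u \<le> norm v"
begin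

lemma refl: "le a a" using lp unfolding linear_preorder_def by blast
lemma trans: "le a b \<Longrightarrow> le b c \<Longrightarrow> le a c" using lp unfolding linear_preorder_def by blast
lemma addl: "le b c \<Longrightarrow> le (a + b) (a + c)" using lp unfolding linear_preorder_def by blast
lemma scale: "le a b \<Longrightarrow> (\<alpha>::real) \<ge> 0 \<Longrightarrow> le (\<alpha> *\<^sub>R a) (\<alpha> *\<^sub>R b)"
  using lp unfolding linear_preorder_def by blast

lemma addr: "le a b \<Longrightarrow> le (a + c) (b + c)"
  using addl[of a b c] by (simp add: add.commute)

lemma add2: "le a b \<Longrightarrow> le c d \<Longrightarrow> le (a + c) (b + d)"
  using addr[of a b c] addl[of c d b] trans by blast

lemma neg: "le a b \<Longrightarrow> le (c - b) (c - a)"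
proof -
  assume "le a b"
  hence "le ((c - a - b) + a) ((c - a - b) + b)" by (rule addl)
  thus ?thesis by (simp add: algebra_simps)
qed

lemma mid: "le p q \<Longrightarrow> le p' q' \<Longrightarrow> le ((1/2) *\<^sub>R (p + p')) ((1/2) *\<^sub>R (q + q'))"
  using add2 scale by simp

lemma half: "(1/2::real) *\<^sub>R (x + x) = (x::'c::real_vector)"
proof -
  have "x + x = (2::real) *\<^sub>R x" by (rule scaleR_2[symmetric])
  thus ?thesis by simp
qed

lemma iV_add: "iV (x + y) = iV x + iV y" using lin by (simp add: linear_add)
lemma iV_diff: "iV (x - y) = iV x - iV y" using lin by (simp add: linear_diff)
lemma iV_scale: "iV (c *\<^sub>R x) = c *\<^sub>R iV x" using lin by (simp add: linear_scale)
lemma iV_0: "iV 0 = 0" using lin by (simp add: linear_0)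

lemma antisym: "le (iV u) (iV v) \<Longrightarrow> le (iV v) (iV u) \<Longrightarrow> u = v"
proof -
  assume a: "le (iV u) (iV v)" and b: "le (iV v) (iV u)"
  have "le (iV u + - iV u) (iV v + - iV u)" using addr[OF a] .
  hence 1: "le 0 (iV (v - u))" by (simp add: iV_diff)
  have "le (iV v + - iV u) (iV u + - iV u)" using addr[OF b] .
  hence "le (iV (v - u)) (iV 0)" by (simp add: iV_diff iV_0)
  hence "norm (v - u) \<le> norm (0::'a)" using mono 1 by blast
  thus ?thesis by simp
qed

lemma A_D:
  assumes A: "\<forall>u1\<in>Vplus iV le. \<forall>u2\<in>Vplus iV le. \<exists>v. is_Vplus_lub iV le (iV u1) (iV u2) v"
  shows "\<forall>u1\<in>Vplus iV le. \<forall>u2\<in>Vplus iV le. \<exists>v. is_Vplus_glb iV le (iV u1) (iV u2) v"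
proof (intro ballI)
  fix u1 u2 assume h1: "u1 \<in> Vplus iV le" and h2: "u2 \<in> Vplus iV le"
  then obtain l where l: "is_Vplus_lub iV le (iV u2) (iV u1) l" using A by blast
  define g where "g = u1 + u2 - l"
  have p1: "le 0 (iV u1)" "le 0 (iV u2)" using h1 h2 unfolding Vplus_def by auto
  have l1: "le (iV u2) (iV l)" "le (iV u1) (iV l)" "le 0 (iV l)"
    using l unfolding is_Vplus_lub_def Vplus_def by auto
  have "le (iV u2) (iV (u1 + u2))" using addr[OF p1(1), of "iV u2"] by (simp add: iV_add)
  moreover have "le (iV u1) (iV (u1 + u2))" using addl[OF p1(2), of "iV u1"] by (simp add: iV_add)
  moreover have "u1 + u2 \<in> Vplus iV le" using add2[OF p1] by (simp add: Vplus_def iV_add)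
  ultimately have "le (iV l) (iV (u1 + u2))" using l unfolding is_Vplus_lub_def by blast
  hence g0: "le 0 (iV g)" using neg[of "iV l" "iV (u1+u2)" "iV (u1+u2)"]
    by (simp add: g_def iV_diff)
  have gu1: "le (iV g) (iV u1)" using neg[OF l1(1), of "iV (u1+u2)"] by (simp add: g_def iV_diff iV_add)
  have gu2: "le (iV g) (iV u2)" using neg[OF l1(2), of "iV (u1+u2)"] by (simp add: g_def iV_diff iV_add)
  have "is_Vplus_glb iV le (iV u1) (iV u2) g"
    unfolding is_Vplus_glb_def
  proof (intro conjI ballI impI)
    show "g \<in> Vplus iV le" using g0 by (simp add: Vplus_def)
    show "le (iV g) (iV u1)" by (fact gu1)
    show "le (iV g) (iV u2)" by (fact gu2)
    fix x assume x: "x \<in> Vplus iV le" and x1: "le (iV x) (iV u1)" and x2: "le (iV x) (iV u2)"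
    have x0: "le 0 (iV x)" using x by (simp add: Vplus_def)
    have a: "le (iV u2) (iV (u1 + u2 - x))" using neg[OF x1, of "iV (u1+u2)"] by (simp add: iV_diff iV_add)
    have b: "le (iV u1) (iV (u1 + u2 - x))" using neg[OF x2, of "iV (u1+u2)"] by (simp add: iV_diff iV_add)
    have c: "u1 + u2 - x \<in> Vplus iV le" using trans[OF p1(1) b] by (simp add: Vplus_def)
    have "le (iV l) (iV (u1 + u2 - x))" using l a b c unfolding is_Vplus_lub_def by blast
    hence "le (iV (u1 + u2) - iV (u1 + u2 - x)) (iV (u1 + u2) - iV l)" by (rule neg)
    thus "le (iV x) (iV g)" by (simp add: g_def iV_diff iV_add)
  qed
  thus "\<exists>v. is_Vplus_glb iV le (iV u1) (iV u2) v" by blast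
qed

lemma D_A:
  assumes D: "\<forall>u1\<in>Vplus iV le. \<forall>u2\<in>Vplus iV le. \<exists>v. is_Vplus_glb iV le (iV u1) (iV u2) v"
  shows "\<forall>u1\<in>Vplus iV le. \<forall>u2\<in>Vplus iV le. \<exists>v. is_Vplus_lub iV le (iV u1) (iV u2) v"
proof (intro ballI)
  fix u1 u2 assume h1: "u1 \<in> Vplus iV le" and h2: "u2 \<in> Vplus iV le"
  have p1: "le 0 (iV u1)" "le 0 (iV u2)" using h1 h2 unfolding Vplus_def by auto
  define u0 where "u0 = u1 + u2"
  have u0a: "le (iV u2) (iV u0)" using addr[OF p1(1), of "iV u2"] by (simp add: iV_add u0_def)
  have u0b: "le (iV u1) (iV u0)" using addl[OF p1(2), of "iV u1"] by (simp add: iV_add u0_def)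
  have "le (iV u1 + - iV u1) (iV u0 + - iV u1)" using addr[OF u0b] .
  hence "u0 - u1 \<in> Vplus iV le" by (simp add: Vplus_def iV_diff)
  moreover have "le (iV u2 + - iV u2) (iV u0 + - iV u2)" using addr[OF u0a] .
  hence "u0 - u2 \<in> Vplus iV le" by (simp add: Vplus_def iV_diff)
  ultimately have "u0 - u1 \<in> Vplus iV le" "u0 - u2 \<in> Vplus iV le" by auto
  then obtain g where g: "is_Vplus_glb iV le (iV (u0 - u1)) (iV (u0 - u2)) g" using D by blast
  have g1: "le (iV g) (iV (u0 - u1))" "le (iV g) (iV (u0 - u2))" "le 0 (iV g)"
    using g unfolding is_Vplus_glb_def Vplus_def by auto
  define v where "v = u0 - g"
  have vu1: "le (iV u1) (iV v)" using neg[OF g1(1), of "iV u0"] by (simp add: v_def iV_diff)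
  have vu2: "le (iV u2) (iV v)" using neg[OF g1(2), of "iV u0"] by (simp add: v_def iV_diff)
  have v0: "le 0 (iV v)" using trans[OF p1(1) vu1] .
  have vle: "le (iV v) (iV u0)" using neg[OF g1(3), of "iV u0"] by (simp add: v_def iV_diff)
  have least: "le (iV v) (iV y)" if y1: "le (iV u1) (iV y)" and y2: "le (iV u2) (iV y)"
    and yu: "le (iV y) (iV u0)" for y
  proof -
    have "le (iV u0 - iV u0) (iV u0 - iV y)" using neg[OF yu] .
    hence a: "u0 - y \<in> Vplus iV le" by (simp add: Vplus_def iV_diff)
    have b: "le (iV (u0 - y)) (iV (u0 - u1))" using neg[OF y1, of "iV u0"] by (simp add: iV_diff)
    have c: "le (iV (u0 - y)) (iV (u0 - u2))" using neg[OF y2, of "iV u0"] by (simp add: iV_diff)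
    have "le (iV (u0 - y)) (iV g)" using g a b c unfolding is_Vplus_glb_def by blast
    hence "le (iV u0 - iV g) (iV u0 - iV (u0 - y))" by (rule neg)
    thus ?thesis by (simp add: v_def iV_diff)
  qed
  have "is_Vplus_lub iV le (iV u1) (iV u2) v"
    unfolding is_Vplus_lub_def
  proof (intro conjI ballI impI)
    show "v \<in> Vplus iV le" using v0 by (simp add: Vplus_def)
    show "le (iV u1) (iV v)" by (fact vu1)
    show "le (iV u2) (iV v)" by (fact vu2)
    fix u assume u: "u \<in> Vplus iV le" and x1: "le (iV u1) (iV u)" and x2: "le (iV u2) (iV u)"
    have "v \<in> Vplus iV le" using v0 by (simp add: Vplus_def)
    then obtain m where m: "is_Vplus_glb iV le (iV u) (iV v) m" using D u by blast
    have m1: "le (iV m) (iV u)" "le (iV m) (iV v)" using m unfolding is_Vplus_glb_def by auto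
    have "le (iV u1) (iV m)" using m h1 x1 vu1 unfolding is_Vplus_glb_def by blast
    moreover have "le (iV u2) (iV m)" using m h2 x2 vu2 unfolding is_Vplus_glb_def by blast
    moreover have "le (iV m) (iV u0)" using trans[OF m1(2) vle] .
    ultimately have "le (iV v) (iV m)" using least by blast
    thus "le (iV v) (iV u)" using trans m1(1) by blast
  qed
  thus "\<exists>v. is_Vplus_lub iV le (iV u1) (iV u2) v" by blast
qed

lemma lub_gmax:
  assumes h1: "u1 \<in> Vplus iV le" and h2: "u2 \<in> Vplus iV le"
    and l: "is_Vplus_lub iV le (iV u1) (iV u2) v"
  shows "gmax iV le (iV u1) (iV u2) = v"
  unfolding gmax_def
proof (rule the_equality)
  have p1: "le 0 (iV u1)" using h1 unfolding Vplus_def by auto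
  have v0: "le 0 (iV v)" and vb: "le (iV u1) (iV v)" "le (iV u2) (iV v)"
    using l unfolding is_Vplus_lub_def Vplus_def by auto
  show *: "v \<in> Omega_max iV le (iV u1) (iV u2) \<and> (\<forall>w\<in>Omega_max iV le (iV u1) (iV u2). norm v \<le> norm w)"
  proof (intro conjI ballI)
    show "v \<in> Omega_max iV le (iV u1) (iV u2)" using vb by (simp add: Omega_max_def)
    fix w assume w: "w \<in> Omega_max iV le (iV u1) (iV u2)"
    hence w1: "le (iV u1) (iV w)" "le (iV u2) (iV w)" by (auto simp: Omega_max_def)
    have "w \<in> Vplus iV le" using trans[OF p1 w1(1)] by (simp add: Vplus_def)
    hence "le (iV v) (iV w)" using l w1 unfolding is_Vplus_lub_def by blast
    thus "norm v \<le> norm w" using mono v0 by blast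
  qed
  fix y assume y: "y \<in> Omega_max iV le (iV u1) (iV u2) \<and> (\<forall>w\<in>Omega_max iV le (iV u1) (iV u2). norm y \<le> norm w)"
  have "norm y \<le> norm v" using y * by blast
  moreover have "norm v \<le> norm y" using y * by blast
  moreover have "(1/2) *\<^sub>R (v + y) \<in> Omega_max iV le (iV u1) (iV u2)"
    using mid[of "iV u1" "iV v" "iV u1" "iV y"] mid[of "iV u2" "iV v" "iV u2" "iV y"] y vb
    by (simp add: Omega_max_def half iV_scale iV_add)
  ultimately have "norm y = norm v" "norm y \<le> norm ((1/2) *\<^sub>R (v + y))" using y by auto
  hence "v = y" using sc_unique[OF sc, of v y] by simp
  thus "y = v" by simp
qed

lemma glb_gmin:
  assumes h1: "u1 \<in> Vplus iV le" and h2: "u2 \<in> Vplus iV le"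
    and l: "is_Vplus_lub iV le (iV u1) (iV u2) m"
    and g: "is_Vplus_glb iV le (iV u1) (iV u2) g"
  shows "gmin iV le (iV u1) (iV u2) = g"
  unfolding gmin_def lub_gmax[OF h1 h2 l]
proof (rule the_equality)
  have mb: "le (iV u1) (iV m)" using l unfolding is_Vplus_lub_def by auto
  have g0: "le 0 (iV g)" and gb: "le (iV g) (iV u1)" "le (iV g) (iV u2)"
    using g unfolding is_Vplus_glb_def Vplus_def by auto
  have mg: "le 0 (iV (m - g))"
    using neg[OF trans[OF gb(1) mb], of "iV m"] by (simp add: iV_diff)
  show *: "g \<in> Omega_min iV le (iV u1) (iV u2) \<and> (\<forall>w\<in>Omega_min iV le (iV u1) (iV u2). norm (m - g) \<le> norm (m - w))"
  proof (intro conjI ballI)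
    show "g \<in> Omega_min iV le (iV u1) (iV u2)" using g0 gb by (simp add: Omega_min_def)
    fix w assume w: "w \<in> Omega_min iV le (iV u1) (iV u2)"
    hence "w \<in> Vplus iV le" "le (iV w) (iV u1)" "le (iV w) (iV u2)" by (auto simp: Omega_min_def Vplus_def)
    hence "le (iV w) (iV g)" using g unfolding is_Vplus_glb_def by blast
    hence "le (iV (m - g)) (iV (m - w))" using neg by (simp add: iV_diff)
    thus "norm (m - g) \<le> norm (m - w)" using mono mg by blast
  qed
  fix y assume y: "y \<in> Omega_min iV le (iV u1) (iV u2) \<and> (\<forall>w\<in>Omega_min iV le (iV u1) (iV u2). norm (m - y) \<le> norm (m - w))"
  have "norm (m - y) \<le> norm (m - g)" using y * by blast
  moreover have "norm (m - g) \<le> norm (m - y)" using y * by blast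
  moreover have "(1/2) *\<^sub>R (g + y) \<in> Omega_min iV le (iV u1) (iV u2)"
    using mid[of 0 "iV g" 0 "iV y"] mid[of "iV g" "iV u1" "iV y" "iV u1"]
      mid[of "iV g" "iV u2" "iV y" "iV u2"] y g0 gb
    by (simp add: Omega_min_def half iV_scale iV_add)
  moreover have "m - (1/2) *\<^sub>R (g + y) = (1/2) *\<^sub>R ((m - g) + (m - y))"
    using half[of m] by (metis add_diff_add scaleR_right_diff_distrib)
  ultimately have "norm (m - g) = norm (m - y)" "norm (m - y) \<le> norm ((1/2) *\<^sub>R ((m - g) + (m - y)))"
    using y by auto
  hence "m - g = m - y" using sc_unique[OF sc, of "m - g" "m - y"] by simp
  thus "y = g" by simp
qed

end

theorem mainTheorem17:
  fixes iV :: "'a::banach \<Rightarrow> 'v::real_vector"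
    and iW :: "'b::banach \<Rightarrow> 'w::real_vector"
    and R :: "('v \<times> 'w) set"
    and le :: "'v \<Rightarrow> 'v \<Rightarrow> bool"
  assumes "ordered_gradient_space iV iW R le"
  defines "A \<equiv> (\<forall>u1\<in>Vplus iV le. \<forall>u2\<in>Vplus iV le. \<exists>v. is_Vplus_lub iV le (iV u1) (iV u2) v)"
    and "B \<equiv> (\<forall>u1\<in>Vplus iV le. \<forall>u2\<in>Vplus iV le.
                 is_Vplus_lub iV le (iV u1) (iV u2) (gmax iV le (iV u1) (iV u2)))"
    and "C \<equiv> Vplus_lattice iV le"
    and "D \<equiv> (\<forall>u1\<in>Vplus iV le. \<forall>u2\<in>Vplus iV le. \<exists>v. is_Vplus_glb iV le (iV u1) (iV u2) v)"
    and "E \<equiv> (\<forall>u1\<in>Vplus iV le. \<forall>u2\<in>Vplus iV le.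
                 is_Vplus_glb iV le (iV u1) (iV u2) (gmin iV le (iV u1) (iV u2)))"
  shows "(A \<longleftrightarrow> B) \<and> (A \<longleftrightarrow> C) \<and> (A \<longleftrightarrow> D) \<and> (A \<longleftrightarrow> E)"
proof -
  interpret ogs iV le
    using assms(1) unfolding ordered_gradient_space_def preordered_gradient_space_def gradient_space_def
      ogs_def by auto
  have AD: "A \<longleftrightarrow> D" unfolding A_def D_def using A_D D_A by blast
  have AB: "A \<longleftrightarrow> B" unfolding A_def B_def using lub_gmax by metis
  have AC: "A \<longleftrightarrow> C" using AD unfolding A_def C_def D_def Vplus_lattice_def by blast
  have AE: "A \<longleftrightarrow> E"
  proof
    assume a: A
    hence d: D using AD by blast
    show E unfolding E_def
    proof (intro ballI)
      fix u1 u2 assume h: "u1 \<in> Vplus iV le" "u2 \<in> Vplus iV le"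
      obtain m where m: "is_Vplus_lub iV le (iV u1) (iV u2) m" using a h unfolding A_def by blast
      obtain g where g: "is_Vplus_glb iV le (iV u1) (iV u2) g" using d h unfolding D_def by blast
      show "is_Vplus_glb iV le (iV u1) (iV u2) (gmin iV le (iV u1) (iV u2))"
        using glb_gmin[OF h m g] g by simp
    qed
  next
    assume E thus A using AD unfolding E_def D_def by blast
  qed
  show ?thesis using AB AC AD AE by blast
qed

end
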